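(* Let $q=2^n$, let $B$ be a $k$-subset of $\mathrm{GF}(q)$ with $k\ge3$, and let $\mathcal B=\mathrm{GA}_1(q)(B)$. Then the following are equivalent: (1) $(\mathrm{GF}(q),\mathcal B)$ is a $3$-design; (2) $\sum_{x,y\in\mathrm{GF}(q)}(-1)^{f_B(x)+f_B(y)+f_B(ux+(1+u)y)}$ is independent of $u\in\mathrm{GF}(q)\setminus\mathrm{GF}(2)$; (3) $\sum_{\alpha\in\mathrm{GF}(q)}\hat f_B(\alpha)\hat f_B(u\alpha)\hat f_B((1+u)\alpha)$ is independent of $u\in\mathrm{GF}(q)\setminus\mathrm{GF}(2)$; (4) $N_B(u,1+u,1)$ is independent of $u\in\mathrm{GF}(q)\setminus\mathrm{GF}(2)$.
   Context: $\mathrm{Tr}$ is the absolute trace $\mathrm{GF}(2^n)\to\mathrm{GF}(2)$. $f_B$ is the characteristic function of $B$ as a Boolean function, and $\hat f(\mu)=\sum_{x\in\mathrm{GF}(2^n)}(-1)^{f(x)+\mathrm{Tr}(\mu x)}$ is the Walsh transform. $N_B(a,b,c)$ is the number of triples $(x,y,z)\in B^3$ with $ax+by+cz=0$. $\mathrm{GA}_1(q)$ is the group of permutations $x\mapsto ax+b$ of $\mathrm{GF}(q)$ with $a\ne0$; $\mathrm{GA}_1(q)(B)=\{\pi(B):\pi\in\mathrm{GA}_1(q)\}$. A pair $(\mathcal P,\mathcal B)$ with $\mathcal B$ a set of $k$-subsets of $\mathcal P$ is a $3$-design if every $3$-subset of $\mathcal P$ lies in exactly $\lambda$ members of $\mathcal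 B$ for some constant $\lambda$. *)

theory Defs
  imports Main
begin

text \<open>GF(2^n) is modelled by a finite field type 'a with card UNIV = 2^n.\<close>

definition abs_trace :: "nat \<Rightarrow> 'a::{field,finite} \<Rightarrow> 'a" where
  "abs_trace n x = (\<Sum>i<n. x ^ (2 ^ i))"

text \<open>(-1)^(Tr x), the trace taking values 0 or 1 in GF(2) viewed inside 'a.\<close>
definition sgn_tr :: "nat \<Rightarrow> 'a::{field,finite} \<Rightarrow> int" where
  "sgn_tr n x = (if abs_trace n x = 0 then 1 else -1)"

text \<open>(-1)^(f_B x), f_B the characteristic function of B.\<close>
definition sgn_char :: "'a set \<Rightarrow> 'a \<Rightarrow> int" where
  "sgn_char B x = (if x \<in> B then -1 else 1)"

definition walsh :: "nat \<Rightarrow> 'a::{field,finite} set \<Rightarrow> 'a \<Rightarrow> int" where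
  "walsh n B \<mu> = (\<Sum>x\<in>UNIV. sgn_char B x * sgn_tr n (\<mu> * x))"

definition N_B :: "'a::{field,finite} set \<Rightarrow> 'a \<Rightarrow> 'a \<Rightarrow> 'a \<Rightarrow> nat" where
  "N_B B a b c = card {(x, y, z). x \<in> B \<and> y \<in> B \<and> z \<in> B \<and> a * x + b * y + c * z = 0}"

definition GA1_orbit :: "'a::{field,finite} set \<Rightarrow> 'a set set" where
  "GA1_orbit B = {(\<lambda>x. a * x + b) ` B | a b. a \<noteq> 0}"

definition is_3_design :: "'a set \<Rightarrow> 'a set set \<Rightarrow> nat \<Rightarrow> bool" where
  "is_3_design P Bs k \<longleftrightarrow> (\<forall>b\<in>Bs. b \<subseteq> P \<and> card b = k) \<and>
     (\<exists>lam. \<forall>T. T \<subseteq> P \<and> card T = 3 \<longrightarrow> card {b\<in>Bs. T \<subseteq> b} = lam)"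

definition indep_of_u :: "('a::{field,finite} \<Rightarrow> 'b) \<Rightarrow> bool" where
  "indep_of_u F \<longleftrightarrow> (\<exists>c. \<forall>u. u \<notin> {0, 1} \<longrightarrow> F u = c)"

end

theory Submission
  imports Defs "HOL-Number_Theory.Residues" "HOL-Computational_Algebra.Polynomial"
begin

section \<open>Characteristic 2\<close>

lemma char2:
  assumes "card (UNIV::'a::{field,finite} set) = 2^n"
  shows "CHAR('a) = 2"
proof -
  have pos: "CHAR('a) > 0" by (simp add: finite_imp_CHAR_pos)
  have pr: "prime CHAR('a)" using prime_CHAR_semidom[OF pos] .
  have "CHAR('a) dvd 2^n" using CHAR_dvd_CARD[where 'a='a] assms by simp
  then have "CHAR('a) dvd 2" using pr prime_dvd_power by blast
  then show ?thesis using primes_dvd_imp_eq[OF pr two_is_prime_nat] by blast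
qed

lemma char2_add_self:
  assumes "card (UNIV::'a::{field,finite} set) = 2^n"
  shows "(x::'a) + x = 0"
  using uminus_CHAR_2[OF char2[OF assms], of x] by (metis add.right_inverse)

lemma frob2:
  assumes "card (UNIV::'a::{field,finite} set) = 2^n"
  shows "((x::'a) + y) ^ (2^i) = x^(2^i) + y^(2^i)"
proof (induction i)
  case 0 then show ?case by simp
next
  case (Suc i)
  have sq: "(a + b)^2 = a^2 + b^2" for a b :: 'a
  proof -
    have "(a+b)^2 = a^2 + b^2 + (a*b + a*b)" by (simp add: power2_eq_square algebra_simps)
    then show ?thesis using char2_add_self[OF assms, of "a*b"] by simp
  qed
  have "(x+y)^(2^Suc i) = ((x+y)^(2^i))^2" by (simp add: power_mult[symmetric] mult.commute)
  also have "\<dots> = (x^(2^i))^2 + (y^(2^i))^2" using Suc sq by simp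
  also have "\<dots> = x^(2^Suc i) + y^(2^Suc i)" by (simp add: power_mult[symmetric] mult.commute)
  finally show ?case .
qed

lemma fermat_ff:
  fixes x :: "'a::{field,finite}"
  shows "x ^ card (UNIV :: 'a set) = x"
proof (cases "x = 0")
  case False
  have "x * (\<Prod>y\<in>UNIV-{0}. x * y) = x * x ^ (card (UNIV :: 'a set) - 1) * \<Prod>(UNIV-{0})"
    by (simp add: prod.distrib mult_ac)
  also have "x * x ^ (card (UNIV :: 'a set) - 1) = x ^ Suc (card (UNIV :: 'a set) - 1)"
    by (subst power_Suc) auto
  also have "Suc (card (UNIV :: 'a set) - 1) = card (UNIV :: 'a set)"
    using finite_UNIV_card_ge_0[where ?'a = 'a] by simp
  also have "(\<Prod>y\<in>UNIV-{0}. x * y) = (\<Prod>y\<in>UNIV-{0}. y)"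
    by (rule prod.reindex_bij_witness[of _ "\<lambda>y. y / x" "\<lambda>y. x * y"]) (use False in auto)
  finally show ?thesis
    by simp
qed (use finite_UNIV_card_ge_0[where ?'a = 'a] in auto)

section \<open>Indicator\<close>

definition ind :: "'b set \<Rightarrow> 'b \<Rightarrow> int" where
  "ind S x = (if x \<in> S then 1 else 0)"

lemma sum_ind: "(\<Sum>y\<in>(UNIV::'b::finite set). ind S y) = int (card S)"
proof -
  have "(\<Sum>y\<in>(UNIV::'b set). ind S y) = (\<Sum>y\<in>UNIV \<inter> S. 1)"
    unfolding ind_def by (subst sum.inter_restrict) auto
  then show ?thesis by simp
qed

lemma sum_ind_lin:
  fixes c :: "'a::{field,finite}"
  assumes "c \<noteq> 0"
  shows "(\<Sum>y\<in>UNIV. ind S (a + c * y)) = int (card S)"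
proof -
  have "(\<Sum>y\<in>UNIV. ind S (a + c * y)) = (\<Sum>y\<in>UNIV. ind S y)"
    by (rule sum.reindex_bij_witness[of _ "\<lambda>y. (y - a) / c" "\<lambda>y. a + c * y"]) (use assms in auto)
  then show ?thesis by (simp add: sum_ind)
qed

lemma sgn_char_ind: "sgn_char B x = 1 - 2 * ind B x"
  by (simp add: sgn_char_def ind_def)

definition aff :: "'a::field \<times> 'a \<Rightarrow> 'a \<Rightarrow> 'a" where
  "aff p x = fst p * x + snd p"

definition Aset :: "('a::field \<times> 'a) set" where
  "Aset = {p. fst p \<noteq> 0}"

definition Dset :: "'a::field set \<Rightarrow> 'a \<Rightarrow> ('a \<times> 'a) set" where
  "Dset B u = {(x, y). x \<in> B \<and> y \<in> B \<and> x \<noteq> y \<and> u * x + (1 + u) * y \<in> B}"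

definition P2set :: "'a::field set \<Rightarrow> 'a \<Rightarrow> ('a \<times> 'a) set" where
  "P2set B u = {(x, y). x \<in> B \<and> y \<in> B \<and> u * x + (1 + u) * y \<in> B}"

definition NN :: "'a::field set \<Rightarrow> 'a \<Rightarrow> int" where
  "NN B u = (\<Sum>x\<in>UNIV. \<Sum>y\<in>UNIV. ind B x * ind B y * ind B (u * x + (1 + u) * y))"

section \<open>Trace\<close>

context
  fixes n :: nat
  assumes cardq: "card (UNIV::'a::{field,finite} set) = 2^n"
begin

lemma two_eq0: "(2::'a) = 0"
  using char2_add_self[OF cardq, of "1::'a"] by (metis one_add_one)

lemma n_pos: "n > 0"
proof (rule ccontr)
  assume "\<not> n > 0"
  then have "card (UNIV::'a set) = 1" using cardq by simp
  moreover have "{0::'a, 1} \<subseteq> UNIV" by simp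
  then have "card {0::'a,1} \<le> card (UNIV::'a set)" by (intro card_mono) auto
  ultimately show False by simp
qed

lemma sum_sq2: "finite A \<Longrightarrow> (\<Sum>i\<in>A. f i :: 'a)^2 = (\<Sum>i\<in>A. (f i)^2)"
proof (induction A rule: finite_induct)
  case empty then show ?case by simp
next
  case (insert a A)
  then show ?case using frob2[OF cardq, of "f a" "sum f A" 1] by simp
qed

lemma tr_add: "abs_trace n (x + y) = abs_trace n x + abs_trace n (y::'a)"
  unfolding abs_trace_def by (simp add: frob2[OF cardq] sum.distrib)

lemma tr_sq: "(abs_trace n (x::'a))^2 = abs_trace n x"
proof -
  have "(abs_trace n x)^2 = (\<Sum>i<n. x^(2^(Suc i)))"
    unfolding abs_trace_def by (simp add: sum_sq2 power_mult[symmetric] mult.commute)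
  also have "(\<Sum>i<n. x^(2^(Suc i))) + x = (\<Sum>i<Suc n. x^(2^i))"
    by (subst sum.lessThan_Suc_shift) simp
  also have "\<dots> = abs_trace n x + x^(2^n)" by (simp add: abs_trace_def)
  also have "x^(2^n) = x" using fermat_ff[of x] cardq by simp
  finally show ?thesis by simp
qed

lemma tr01: "abs_trace n (x::'a) = 0 \<or> abs_trace n x = 1"
proof -
  have "abs_trace n x * (abs_trace n x - 1) = 0" using tr_sq[of x]
    by (simp add: power2_eq_square algebra_simps)
  then show ?thesis by simp
qed

lemma tr_nonzero: "\<exists>x::'a. abs_trace n x \<noteq> 0"
proof -
  define p :: "'a poly" where "p = (\<Sum>i<n. monom 1 (2^i))"
  have pe: "poly p x = abs_trace n x" for x
    by (simp add: p_def abs_trace_def poly_sum poly_monom)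
  have cp: "coeff p j = (\<Sum>i<n. if 2^i = j then 1 else 0)" for j
    by (simp add: p_def coeff_sum coeff_monom)
  have "coeff p (2^(n-1)) = 1"
  proof -
    have "(\<Sum>i<n. if 2^i = (2::nat)^(n-1) then (1::'a) else 0) = (\<Sum>i\<in>{n-1}. 1)"
      using n_pos by (intro sum.mono_neutral_cong_right) auto
    then show ?thesis using cp by simp
  qed
  then have p0: "p \<noteq> 0" by auto
  have "degree p \<le> 2^(n-1)"
  proof (rule degree_le, intro allI impI)
    fix j :: nat assume j: "2^(n-1) < j"
    have "(2::nat)^i \<noteq> j" if "i < n" for i
    proof -
      have "(2::nat)^i \<le> 2^(n-1)" using that by (intro power_increasing) auto
      then show ?thesis using j by auto
    qed
    then show "coeff p j = 0" using cp by simp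
  qed
  then have "card {x. poly p x = 0} \<le> 2^(n-1)"
    using card_poly_roots_bound[OF p0] by linarith
  also have "\<dots> < 2^n" using n_pos by simp
  finally have "{x. poly p x = 0} \<noteq> UNIV" using cardq by auto
  then show ?thesis using pe by auto
qed

lemma e_add: "sgn_tr n ((x::'a) + y) = sgn_tr n x * sgn_tr n y"
proof -
  have "(1::'a) + 1 = 0" using two_eq0 by simp
  then show ?thesis
    unfolding sgn_tr_def tr_add using tr01[of x] tr01[of y] by auto
qed

lemma e_sum0: "(\<Sum>a\<in>UNIV. sgn_tr n (a::'a)) = 0"
proof -
  obtain b :: 'a where b: "abs_trace n b \<noteq> 0" using tr_nonzero by blast
  then have eb: "sgn_tr n b = -1" by (simp add: sgn_tr_def)
  have "(\<Sum>a\<in>UNIV. sgn_tr n (a::'a)) = (\<Sum>a\<in>UNIV. sgn_tr n (a + b))"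
    by (rule sum.reindex_bij_witness[of _ "\<lambda>a. a + b" "\<lambda>a. a + b"])
       (auto simp: add.assoc char2_add_self[OF cardq])
  also have "\<dots> = (\<Sum>a\<in>UNIV. - sgn_tr n (a::'a))"
    by (rule sum.cong) (simp_all add: e_add eb)
  also have "\<dots> = - (\<Sum>a\<in>UNIV. sgn_tr n (a::'a))"
    by (simp add: sum_negf)
  finally show ?thesis by simp
qed

lemma e_orth: "(\<Sum>a\<in>UNIV. sgn_tr n (a * (x::'a))) = (if x = 0 then int (2^n) else 0)"
proof (cases "x = 0")
  case True
  have z: "(\<Sum>i<n. (0::'a) ^ 2 ^ i) = 0" by (intro sum.neutral) simp
  have "sgn_tr n (a * x) = 1" for a
    using True z by (simp add: sgn_tr_def abs_trace_def)
  then have "(\<Sum>a\<in>UNIV. sgn_tr n (a * x)) = (\<Sum>a\<in>(UNIV::'a set). 1)" by simp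
  also have "\<dots> = int (2^n)" using cardq by simp
  finally show ?thesis using True by simp
next
  case False
  have "(\<Sum>a\<in>UNIV. sgn_tr n (a::'a)) = (\<Sum>a\<in>UNIV. sgn_tr n (a * x))"
    by (rule sum.reindex_bij_witness[of _ "\<lambda>a. a * x" "\<lambda>a. a / x"]) (use False in auto)
  then show ?thesis using e_sum0 False by simp
qed

lemma add_eq0_iff2: "((x::'a) + w = 0) = (x = w)"
  by (metis eq_neg_iff_add_eq_0 uminus_CHAR_2[OF char2[OF cardq]])

lemma e3: "sgn_tr n ((\<alpha>::'a) * (z + u*x + v*y)) = sgn_tr n (\<alpha>*z) * sgn_tr n (u*\<alpha>*x) * sgn_tr n (v*\<alpha>*y)"
  by (simp add: distrib_left e_add mult_ac)

lemma triple_prod: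
  "(\<Sum>z\<in>A. f z) * (\<Sum>x\<in>C. g x) * (\<Sum>y\<in>D. h y) = (\<Sum>z\<in>A. \<Sum>x\<in>C. \<Sum>y\<in>D. f z * g x * (h y :: int))"
proof -
  have "(\<Sum>z\<in>A. f z) * (\<Sum>x\<in>C. g x) * (\<Sum>y\<in>D. h y) = (\<Sum>z\<in>A. f z) * ((\<Sum>x\<in>C. g x) * (\<Sum>y\<in>D. h y))"
    by (rule mult.assoc)
  also have "\<dots> = (\<Sum>z\<in>A. f z) * (\<Sum>x\<in>C. \<Sum>y\<in>D. g x * h y)"
    by (subst sum_product) (rule refl)
  also have "\<dots> = (\<Sum>z\<in>A. \<Sum>x\<in>C. f z * (\<Sum>y\<in>D. g x * h y))"
    by (subst sum_product) (rule refl)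
  also have "\<dots> = (\<Sum>z\<in>A. \<Sum>x\<in>C. \<Sum>y\<in>D. f z * g x * h y)"
    by (intro sum.cong refl) (simp add: sum_distrib_left mult.assoc)
  finally show ?thesis .
qed

lemma walsh_prod:
  "walsh n B (\<alpha>::'a) * walsh n B (u*\<alpha>) * walsh n B (v*\<alpha>) =
   (\<Sum>z\<in>UNIV. \<Sum>x\<in>UNIV. \<Sum>y\<in>UNIV. sgn_char B z * sgn_char B x * sgn_char B y * sgn_tr n (\<alpha> * (z + u*x + v*y)))"
  unfolding walsh_def triple_prod e3 by (intro sum.cong refl) (simp add: mult_ac)

lemma walsh_triple:
  "(\<Sum>\<alpha>\<in>UNIV. walsh n B (\<alpha>::'a) * walsh n B (u * \<alpha>) * walsh n B (v * \<alpha>)) =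
   int (2^n) * (\<Sum>x\<in>UNIV. \<Sum>y\<in>UNIV. sgn_char B x * sgn_char B y * sgn_char B (u * x + v * y))"
proof -
  let ?c = "sgn_char B"
  let ?F = "\<lambda>\<alpha> z x y. ?c z * ?c x * ?c y * sgn_tr n ((\<alpha>::'a) * (z + u*x + v*y))"
  have "(\<Sum>\<alpha>\<in>UNIV. walsh n B (\<alpha>::'a) * walsh n B (u * \<alpha>) * walsh n B (v * \<alpha>))
      = (\<Sum>\<alpha>\<in>UNIV. \<Sum>z\<in>UNIV. \<Sum>x\<in>UNIV. \<Sum>y\<in>UNIV. ?F \<alpha> z x y)"
    by (simp add: walsh_prod)
  also have "\<dots> = (\<Sum>z\<in>UNIV. \<Sum>\<alpha>\<in>UNIV. \<Sum>x\<in>UNIV. \<Sum>y\<in>UNIV. ?F \<alpha> z x y)"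
    by (rule sum.swap)
  also have "\<dots> = (\<Sum>z\<in>UNIV. \<Sum>x\<in>UNIV. \<Sum>\<alpha>\<in>UNIV. \<Sum>y\<in>UNIV. ?F \<alpha> z x y)"
    by (rule sum.cong[OF refl], rule sum.swap)
  also have "\<dots> = (\<Sum>z\<in>UNIV. \<Sum>x\<in>UNIV. \<Sum>y\<in>UNIV. \<Sum>\<alpha>\<in>UNIV. ?F \<alpha> z x y)"
    by (rule sum.cong[OF refl], rule sum.cong[OF refl], rule sum.swap)
  also have "\<dots> = (\<Sum>z\<in>UNIV. \<Sum>x\<in>UNIV. \<Sum>y\<in>UNIV. ?c z * ?c x * ?c y * (if z + u*x + v*y = 0 then int (2^n) else 0))"
    by (simp add: sum_distrib_left[symmetric] e_orth)
  also have "\<dots> = (\<Sum>x\<in>UNIV. \<Sum>y\<in>UNIV. \<Sum>z\<in>UNIV. if z = u*x + v*y then int (2^n) * (?c x * ?c y * ?c z) else 0)"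
  proof -
    have "(\<Sum>z\<in>UNIV. \<Sum>x\<in>UNIV. \<Sum>y\<in>UNIV. ?c z * ?c x * ?c y * (if z + u*x + v*y = 0 then int (2^n) else 0))
       = (\<Sum>z\<in>UNIV. \<Sum>x\<in>UNIV. \<Sum>y\<in>UNIV. if z = u*x + v*y then int (2^n) * (?c x * ?c y * ?c z) else 0)"
      by (intro sum.cong refl) (auto simp: add.assoc add_eq0_iff2)
    also have "\<dots> = (\<Sum>x\<in>UNIV. \<Sum>z\<in>UNIV. \<Sum>y\<in>UNIV. if z = u*x + v*y then int (2^n) * (?c x * ?c y * ?c z) else 0)"
      by (rule sum.swap)
    also have "\<dots> = (\<Sum>x\<in>UNIV. \<Sum>y\<in>UNIV. \<Sum>z\<in>UNIV. if z = u*x + v*y then int (2^n) * (?c x * ?c y * ?c z) else 0)"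
      by (rule sum.cong[OF refl], rule sum.swap)
    finally show ?thesis .
  qed
  also have "\<dots> = (\<Sum>x\<in>UNIV. \<Sum>y\<in>UNIV. int (2^n) * (?c x * ?c y * ?c (u*x + v*y)))"
    by (simp add: sum.delta)
  also have "\<dots> = int (2^n) * (\<Sum>x\<in>UNIV. \<Sum>y\<in>UNIV. ?c x * ?c y * ?c (u * x + v * y))"
    by (simp add: sum_distrib_left)
  finally show ?thesis .
qed

lemma one_plus_ne0: "(u::'a) \<noteq> 1 \<Longrightarrow> 1 + u \<noteq> 0"
  using add_eq0_iff2[of 1 u] by auto

lemma S_formula:
  assumes u0: "(u::'a) \<noteq> 0" and u1: "u \<noteq> 1"
  shows "(\<Sum>x\<in>UNIV. \<Sum>y\<in>UNIV. sgn_char B x * sgn_char B y * sgn_char B (u * x + (1 + u) * y))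
     = (int (2^n) - 4 * int (card B)) * (int (2^n) - 2 * int (card B)) + 4 * int (card B)^2 - 8 * NN B u"
proof -
  define q where "q = int (2^n)"
  define k where "k = int (card B)"
  let ?I = "ind B"
  define M where "M x = (\<Sum>y\<in>UNIV. ?I y * ?I (u * x + (1 + u) * y))" for x
  have c1: "1 + u \<noteq> 0" using one_plus_ne0 u1 .
  have sI: "(\<Sum>y\<in>UNIV. ?I y) = k" by (simp add: sum_ind k_def)
  have s1: "(\<Sum>y\<in>(UNIV::'a set). (1::int)) = q" by (simp add: q_def cardq)
  have sz: "(\<Sum>y\<in>UNIV. ?I (u * x + (1 + u) * y)) = k" for x
    using sum_ind_lin[OF c1, of B "u*x"] by (simp add: k_def)
  have sz2: "(\<Sum>x\<in>UNIV. ?I (u * x + (1 + u) * y)) = k" for y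
    using sum_ind_lin[OF u0, of B "(1+u)*y"] by (simp add: k_def add.commute)
  have inner: "(\<Sum>y\<in>UNIV. sgn_char B y * sgn_char B (u * x + (1 + u) * y)) = q - 4 * k + 4 * M x" for x
  proof -
    have "(\<Sum>y\<in>UNIV. sgn_char B y * sgn_char B (u * x + (1 + u) * y))
        = (\<Sum>y\<in>UNIV. 1 + (-2) * ?I y + (-2) * ?I (u * x + (1 + u) * y) + 4 * (?I y * ?I (u * x + (1 + u) * y)))"
      by (intro sum.cong refl) (simp add: sgn_char_ind algebra_simps)
    also have "\<dots> = (\<Sum>y\<in>(UNIV::'a set). 1) + (-2) * (\<Sum>y\<in>UNIV. ?I y) + (-2) * (\<Sum>y\<in>UNIV. ?I (u * x + (1 + u) * y))
        + 4 * (\<Sum>y\<in>UNIV. ?I y * ?I (u * x + (1 + u) * y))"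
      by (simp only: sum.distrib sum_distrib_left)
    also have "\<dots> = q - 4 * k + 4 * M x" by (simp add: sI sz M_def q_def cardq)
    finally show ?thesis .
  qed
  have sM: "(\<Sum>x\<in>UNIV. M x) = k^2"
  proof -
    have "(\<Sum>x\<in>UNIV. M x) = (\<Sum>y\<in>UNIV. \<Sum>x\<in>UNIV. ?I y * ?I (u * x + (1 + u) * y))"
      unfolding M_def by (rule sum.swap)
    also have "\<dots> = (\<Sum>y\<in>UNIV. ?I y * k)"
      by (simp add: sum_distrib_left[symmetric] sz2)
    also have "\<dots> = k^2" by (simp add: sum_distrib_right[symmetric] sI power2_eq_square)
    finally show ?thesis .
  qed
  have sIM: "(\<Sum>x\<in>UNIV. ?I x * M x) = NN B u"
    unfolding M_def NN_def by (simp add: sum_distrib_left mult.assoc)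
  have "(\<Sum>x\<in>UNIV. \<Sum>y\<in>UNIV. sgn_char B x * sgn_char B y * sgn_char B (u * x + (1 + u) * y))
      = (\<Sum>x\<in>UNIV. sgn_char B x * (q - 4 * k + 4 * M x))"
    by (simp add: inner[symmetric] sum_distrib_left mult.assoc)
  also have "\<dots> = (\<Sum>x\<in>UNIV. (q - 4 * k) + (q - 4 * k) * (-2) * ?I x + 4 * M x + (-8) * (?I x * M x))"
    by (intro sum.cong refl) (simp add: sgn_char_ind algebra_simps)
  also have "\<dots> = (\<Sum>x\<in>(UNIV::'a set). (q - 4 * k)) + (q - 4 * k) * (-2) * (\<Sum>x\<in>UNIV. ?I x) + 4 * (\<Sum>x\<in>UNIV. M x)
        + (-8) * (\<Sum>x\<in>UNIV. ?I x * M x)"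
    by (simp only: sum.distrib sum_distrib_left)
  also have "\<dots> = (q - 4 * k) * q + (q - 4 * k) * (-2) * k + 4 * k^2 - 8 * NN B u"
    using s1 by (simp add: sI sM sIM q_def cardq)
  also have "\<dots> = (q - 4 * k) * (q - 2 * k) + 4 * k^2 - 8 * NN B u"
    by (simp add: algebra_simps)
  finally show ?thesis by (simp add: q_def k_def)
qed

lemma NB_NN: "int (N_B B u (1 + u) 1) = NN B (u::'a)"
proof -
  define P2 where "P2 = {(x, y). x \<in> B \<and> y \<in> B \<and> u * x + (1 + u) * y \<in> B}"
  have eq: "{(x, y, z). x \<in> B \<and> y \<in> B \<and> z \<in> B \<and> u * x + (1 + u) * y + 1 * z = 0}
      = (\<lambda>(x, y). (x, y, u * x + (1 + u) * y)) ` P2"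
    unfolding P2_def by (auto simp: add_eq0_iff2 image_iff)
  have inj: "inj_on (\<lambda>(x, y). (x, y, u * x + (1 + u) * y)) P2"
    by (auto simp: inj_on_def)
  have "N_B B u (1 + u) 1 = card P2"
    unfolding N_B_def eq using card_image[OF inj] .
  moreover have "int (card P2) = NN B u"
  proof -
    have "int (card P2) = (\<Sum>p\<in>(UNIV::('a\<times>'a) set). ind P2 p)" by (simp add: sum_ind)
    also have "\<dots> = (\<Sum>x\<in>UNIV. \<Sum>y\<in>UNIV. ind P2 (x, y))"
      by (simp add: UNIV_Times_UNIV[symmetric] sum.cartesian_product del: UNIV_Times_UNIV)
    also have "\<dots> = NN B u"
      unfolding NN_def by (intro sum.cong refl) (simp add: ind_def P2_def)
    finally show ?thesis .
  qed
  ultimately show ?thesis by simp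
qed

section \<open>Affine maps and the design\<close>

lemma orbit_eq: "GA1_orbit B = (\<lambda>p. aff p ` B) ` (Aset :: ('a \<times> 'a) set)"
proof (rule Set.set_eqI)
  fix X
  show "X \<in> GA1_orbit B \<longleftrightarrow> X \<in> (\<lambda>p. aff p ` B) ` (Aset :: ('a \<times> 'a) set)"
  proof
    assume "X \<in> GA1_orbit B"
    then obtain a b :: 'a where X: "X = (\<lambda>x. a * x + b) ` B" and a: "a \<noteq> 0"
      unfolding GA1_orbit_def by blast
    show "X \<in> (\<lambda>p. aff p ` B) ` Aset"
      by (rule image_eqI[of _ _ "(a, b)"]) (use X a in \<open>simp_all add: aff_def Aset_def\<close>)
  next
    assume "X \<in> (\<lambda>p. aff p ` B) ` (Aset :: ('a \<times> 'a) set)"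
    then obtain p :: "'a \<times> 'a" where "fst p \<noteq> 0" "X = aff p ` B" by (auto simp: Aset_def)
    then show "X \<in> GA1_orbit B" unfolding GA1_orbit_def aff_def by blast
  qed
qed

lemma mem_aff:
  assumes "fst p \<noteq> 0"
  shows "(t \<in> aff p ` B) = ((t - snd p) / fst p \<in> (B::'a set))"
proof
  assume "t \<in> aff p ` B"
  then obtain x where "x \<in> B" "t = fst p * x + snd p" by (auto simp: aff_def)
  then show "(t - snd p) / fst p \<in> B" using assms by simp
next
  assume h: "(t - snd p) / fst p \<in> B"
  have "t = aff p ((t - snd p) / fst p)" using assms by (simp add: aff_def)
  then show "t \<in> aff p ` B" using h by blast
qed

lemma minus2: "(x::'a) - y = x + y"
  using minus_CHAR_2[OF char2[OF cardq]] .

lemma key_id: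
  assumes a: "(a::'a) \<noteq> 0" and t12: "t1 \<noteq> t2"
  shows "(t3 - c) / a = ((t3 - t1) / (t2 - t1)) * ((t2 - c) / a) + (1 + (t3 - t1) / (t2 - t1)) * ((t1 - c) / a)"
proof -
  define w where "w = (t3 - t1) / (t2 - t1)"
  define X where "X = (t2 - c) / a"
  define Y where "Y = (t1 - c) / a"
  have d: "t2 - t1 \<noteq> 0" using t12 by simp
  have "1 + w = 1 - w" by (simp add: minus2)
  then have "w * X + (1 + w) * Y = Y + w * (X - Y)" by (simp add: algebra_simps)
  also have "X - Y = (t2 - t1) / a" unfolding X_def Y_def by (simp add: diff_divide_distrib)
  also have "w * ((t2 - t1) / a) = (t3 - t1) / a" unfolding w_def using d by simp
  also have "Y + (t3 - t1) / a = (t3 - c) / a" unfolding Y_def by (simp add: add_divide_distrib[symmetric])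
  finally show ?thesis unfolding w_def X_def Y_def by simp
qed

lemma r2_lemma:
  assumes d: "t2 - t1 \<noteq> (0::'a)" and xy0: "x - y \<noteq> 0"
  shows "(t2 - (t1 - (t2 - t1) / (x - y) * y)) / ((t2 - t1) / (x - y)) = x"
proof -
  define a where "a = (t2 - t1) / (x - y)"
  have a0: "a \<noteq> 0" using d xy0 by (simp add: a_def)
  have "(t2 - (t1 - a * y)) / a = ((t2 - t1) + a * y) / a" by (simp add: algebra_simps)
  also have "\<dots> = (t2 - t1) / a + a * y / a" by (rule add_divide_distrib)
  also have "a * y / a = y" using a0 by simp
  also have "(t2 - t1) / a = x - y" using d xy0 by (simp add: a_def)
  finally show ?thesis by (simp add: a_def)
qed

lemma count_D:
  assumes t12: "(t1::'a) \<noteq> t2"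
  shows "card {p\<in>Aset. {t1, t2, t3} \<subseteq> aff p ` B} = card (Dset B ((t3 - t1) / (t2 - t1)))"
proof -
  define u where "u = (t3 - t1) / (t2 - t1)"
  have d: "t2 - t1 \<noteq> 0" using t12 by simp
  define f where "f p = ((t2 - snd p) / fst p, (t1 - snd p) / fst p)" for p :: "'a \<times> 'a"
  define g where "g xy = ((t2 - t1) / (fst xy - snd xy), t1 - (t2 - t1) / (fst xy - snd xy) * snd xy)" for xy :: "'a \<times> 'a"
  define S where "S = {p\<in>Aset. {t1, t2, t3} \<subseteq> aff p ` B}"
  have memS: "p \<in> S \<longleftrightarrow> fst p \<noteq> 0 \<and> (t1 - snd p) / fst p \<in> B \<and> (t2 - snd p) / fst p \<in> B \<and> (t3 - snd p) / fst p \<in> B" for p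
  proof (cases "fst p = 0")
    case True then show ?thesis by (simp add: S_def Aset_def)
  next
    case False then show ?thesis by (simp add: S_def Aset_def mem_aff)
  qed
  have "bij_betw f S (Dset B u)"
  proof (rule bij_betw_byWitness[where f' = g])
    show "\<forall>p\<in>S. g (f p) = p"
    proof
      fix p assume "p \<in> S"
      then have a: "fst p \<noteq> 0" by (simp add: memS)
      have e: "(t2 - snd p) / fst p - (t1 - snd p) / fst p = (t2 - t1) / fst p"
        using a by (simp add: field_simps)
      show "g (f p) = p" using a d unfolding g_def f_def
        by (simp add: e)
    qed
    show "\<forall>xy\<in>Dset B u. f (g xy) = xy"
    proof
      fix xy assume "xy \<in> Dset B u"
      then obtain x y where xyd: "xy = (x, y)" and xy0: "x - y \<noteq> 0" by (auto simp: Dset_def)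
      define a where "a = (t2 - t1) / (x - y)"
      have a0: "a \<noteq> 0" using d xy0 by (simp add: a_def)
      have r1: "(t1 - (t1 - a * y)) / a = y" using a0 by simp
      have r2: "(t2 - (t1 - a * y)) / a = x" using r2_lemma[OF d xy0] by (simp add: a_def)
      show "f (g xy) = xy" unfolding xyd g_def f_def using r1 r2 by (simp add: a_def)
    qed
    show "f ` S \<subseteq> Dset B u"
    proof
      fix z assume "z \<in> f ` S"
      then obtain p where p: "p \<in> S" and z: "z = f p" by blast
      then have a: "fst p \<noteq> 0" by (simp add: memS)
      have ne: "(t2 - snd p) / fst p \<noteq> (t1 - snd p) / fst p"
        using a t12 by (simp add: divide_cancel_right)
      have "(t3 - snd p) / fst p = u * ((t2 - snd p) / fst p) + (1 + u) * ((t1 - snd p) / fst p)"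
        unfolding u_def by (rule key_id[OF a t12])
      then show "z \<in> Dset B u" using p ne unfolding z f_def Dset_def memS by auto
    qed
    show "g ` Dset B u \<subseteq> S"
    proof
      fix z assume "z \<in> g ` Dset B u"
      then obtain xy where xyD: "xy \<in> Dset B u" and z0: "z = g xy" by blast
      obtain x y where xyp: "xy = (x, y)" by fastforce
      have xy: "(x, y) \<in> Dset B u" and z: "z = g (x, y)" using xyD z0 xyp by simp_all
      have xy1: "x \<in> B" "y \<in> B" "x \<noteq> y" "u * x + (1 + u) * y \<in> B" using xy by (auto simp: Dset_def)
      have xy0: "x - y \<noteq> 0" using xy1 by simp
      define a where "a = (t2 - t1) / (x - y)"
      have a0: "a \<noteq> 0" using d xy0 by (simp add: a_def)
      have z': "z = (a, t1 - a * y)" by (simp add: z g_def a_def)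
      have r1: "(t1 - (t1 - a * y)) / a = y" using a0 by simp
      have r2: "(t2 - (t1 - a * y)) / a = x" using r2_lemma[OF d xy0] by (simp add: a_def)
      have "(t3 - (t1 - a * y)) / a = u * ((t2 - (t1 - a * y)) / a) + (1 + u) * ((t1 - (t1 - a * y)) / a)"
        unfolding u_def by (rule key_id[OF a0 t12])
      then have r3: "(t3 - (t1 - a * y)) / a = u * x + (1 + u) * y" using r1 r2 by simp
      show "z \<in> S" unfolding memS z' using a0 r1 r2 r3 xy1 by simp
    qed
  qed
  then show ?thesis using bij_betw_same_card u_def S_def by blast
qed

lemma NB_P2: "N_B B u (1 + u) 1 = card (P2set B (u::'a))"
proof -
  have eq: "{(x, y, z). x \<in> B \<and> y \<in> B \<and> z \<in> B \<and> u * x + (1 + u) * y + 1 * z = 0}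
      = (\<lambda>(x, y). (x, y, u * x + (1 + u) * y)) ` P2set B u"
    unfolding P2set_def by (auto simp: add_eq0_iff2 image_iff)
  have inj: "inj_on (\<lambda>(x, y). (x, y, u * x + (1 + u) * y)) (P2set B u)"
    by (auto simp: inj_on_def)
  show ?thesis
    unfolding N_B_def eq using card_image[OF inj] .
qed

lemma P2_D: "card (P2set B (u::'a)) = card (Dset B u) + card B"
proof -
  have diag: "u * x + (1 + u) * x = x" for x :: 'a
    using char2_add_self[OF cardq, of "u*x"] by (simp add: algebra_simps)
  have "P2set B u = Dset B u \<union> (\<lambda>x. (x, x)) ` B"
    unfolding P2set_def Dset_def using diag by auto
  moreover have "Dset B u \<inter> (\<lambda>x. (x, x)) ` B = {}" unfolding Dset_def by auto
  moreover have "card ((\<lambda>x. (x, x)) ` B) = card B" by (rule card_image) (auto simp: inj_on_def)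
  ultimately show ?thesis by (simp add: card_Un_disjoint)
qed

lemma fiber_card:
  assumes p0: "fst p0 \<noteq> (0::'a)"
  shows "card {p\<in>Aset. aff p ` B = aff p0 ` B} = card {p\<in>Aset. aff p ` B = (B::'a set)}"
proof -
  define a0 where "a0 = fst p0"
  define b0 where "b0 = snd p0"
  have a0: "a0 \<noteq> 0" using p0 by (simp add: a0_def)
  define psi where "psi y = (y - b0) / a0" for y :: 'a
  have psi_aff0: "psi ` (aff p0 ` B) = B"
  proof -
    have "psi ` (aff p0 ` B) = (\<lambda>x. psi (aff p0 x)) ` B" by (simp add: image_image)
    also have "\<dots> = (\<lambda>x. x) ` B" using a0 by (intro image_cong refl) (simp add: psi_def aff_def a0_def b0_def)
    finally show ?thesis by simp
  qed
  define g where "g p = (fst p / a0, (snd p - b0) / a0)" for p :: "'a \<times> 'a"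
  define h where "h p = (a0 * fst p, a0 * snd p + b0)" for p :: "'a \<times> 'a"
  have g_aff: "aff (g p) x = psi (aff p x)" for p x
    using a0 by (simp add: g_def psi_def aff_def field_simps)
  have h_aff: "aff (h p) x = aff p0 (aff p x)" for p x
    by (simp add: h_def aff_def a0_def b0_def algebra_simps)
  have g_img: "aff (g p) ` B = psi ` (aff p ` B)" for p
    by (simp add: image_image g_aff)
  have h_img: "aff (h p) ` B = aff p0 ` (aff p ` B)" for p
    by (simp add: image_image h_aff)
  have "bij_betw g {p\<in>Aset. aff p ` B = aff p0 ` B} {p\<in>Aset. aff p ` B = B}"
  proof (rule bij_betw_byWitness[where f' = h])
    show "\<forall>p\<in>{p\<in>Aset. aff p ` B = aff p0 ` B}. h (g p) = p"
      using a0 by (simp add: g_def h_def)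
    show "\<forall>p\<in>{p\<in>Aset. aff p ` B = B}. g (h p) = p"
      using a0 by (simp add: g_def h_def)
    show "g ` {p\<in>Aset. aff p ` B = aff p0 ` B} \<subseteq> {p\<in>Aset. aff p ` B = B}"
    proof
      fix q assume "q \<in> g ` {p\<in>Aset. aff p ` B = aff p0 ` B}"
      then obtain p where p: "p \<in> Aset" "aff p ` B = aff p0 ` B" and q: "q = g p" by blast
      have "fst q \<noteq> 0" using p(1) a0 q by (simp add: Aset_def g_def)
      moreover have "aff q ` B = B" using q g_img[of p] p(2) psi_aff0 by simp
      ultimately show "q \<in> {p\<in>Aset. aff p ` B = B}" by (simp add: Aset_def)
    qed
    show "h ` {p\<in>Aset. aff p ` B = B} \<subseteq> {p\<in>Aset. aff p ` B = aff p0 ` B}"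
    proof
      fix q assume "q \<in> h ` {p\<in>Aset. aff p ` B = B}"
      then obtain p where p: "p \<in> Aset" "aff p ` B = B" and q: "q = h p" by blast
      have "fst q \<noteq> 0" using p(1) a0 q by (simp add: Aset_def h_def)
      moreover have "aff q ` B = aff p0 ` B" using q h_img[of p] p(2) by simp
      ultimately show "q \<in> {p\<in>Aset. aff p ` B = aff p0 ` B}" by (simp add: Aset_def)
    qed
  qed
  then show ?thesis by (rule bij_betw_same_card)
qed

lemma count_blocks:
  "card {p\<in>Aset. T \<subseteq> aff p ` B} = card {p\<in>Aset. aff p ` B = (B::'a set)} * card {b\<in>GA1_orbit B. T \<subseteq> b}"
proof -
  define I where "I = {b\<in>GA1_orbit B. T \<subseteq> b}"
  define Fb where "Fb b = {p\<in>Aset. aff p ` B = b}" for b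
  have eq: "{p\<in>Aset. T \<subseteq> aff p ` B} = \<Union>(Fb ` I)"
    unfolding I_def Fb_def orbit_eq by auto
  have "card (\<Union>(Fb ` I)) = (\<Sum>b\<in>I. card (Fb b))"
    by (rule card_UN_disjoint) (auto simp: Fb_def)
  also have "\<dots> = (\<Sum>b\<in>I. card {p\<in>Aset. aff p ` B = B})"
  proof (rule sum.cong[OF refl])
    fix b assume "b \<in> I"
    then obtain p0 where "p0 \<in> Aset" "b = aff p0 ` B" unfolding I_def orbit_eq by auto
    then show "card (Fb b) = card {p\<in>Aset. aff p ` B = B}"
      unfolding Fb_def using fiber_card[of p0 B] by (simp add: Aset_def)
  qed
  also have "\<dots> = card {p\<in>Aset. aff p ` B = B} * card I" by simp
  finally show ?thesis using eq I_def by simp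
qed

lemma indep_pairwise:
  "indep_of_u (F :: 'a \<Rightarrow> 'b) \<longleftrightarrow> (\<forall>u v. u \<notin> {0, 1} \<longrightarrow> v \<notin> {0, 1} \<longrightarrow> F u = F v)"
proof
  assume "indep_of_u F" then show "\<forall>u v. u \<notin> {0, 1} \<longrightarrow> v \<notin> {0, 1} \<longrightarrow> F u = F v"
    unfolding indep_of_u_def by metis
next
  assume h: "\<forall>u v. u \<notin> {0, 1} \<longrightarrow> v \<notin> {0, 1} \<longrightarrow> F u = F v"
  show "indep_of_u F"
  proof (cases "\<exists>u0. u0 \<notin> {0::'a, 1}")
    case True
    then obtain u0 :: 'a where "u0 \<notin> {0, 1}" by blast
    then show ?thesis unfolding indep_of_u_def using h by metis
  next
    case False then show ?thesis unfolding indep_of_u_def by blast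
  qed
qed

lemma indep_transfer:
  assumes "\<forall>u. u \<notin> {0, 1} \<longrightarrow> F u = H (G u)" and "inj H"
  shows "indep_of_u (F :: 'a \<Rightarrow> 'b) \<longleftrightarrow> indep_of_u (G :: 'a \<Rightarrow> 'c)"
  unfolding indep_pairwise using assms by (metis injD)

lemma design_iff_N:
  "is_3_design (UNIV :: 'a set) (GA1_orbit B) (card B) \<longleftrightarrow> indep_of_u (\<lambda>u. N_B B (u::'a) (1 + u) 1)"
proof -
  define s where "s = card {p\<in>Aset. aff p ` B = (B::'a set)}"
  have "(1, 0) \<in> {p\<in>Aset. aff p ` B = (B::'a set)}" by (simp add: Aset_def aff_def)
  then have s0: "s > 0" unfolding s_def by (intro card_gt_0_iff[THEN iffD2]) auto
  have blocks: "\<forall>b\<in>GA1_orbit B. b \<subseteq> UNIV \<and> card b = card B"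
  proof
    fix b assume "b \<in> GA1_orbit B"
    then obtain p where p: "fst p \<noteq> 0" "b = aff p ` B" unfolding orbit_eq Aset_def by auto
    have "inj_on (aff p) B" using p(1) by (auto simp: inj_on_def aff_def)
    then show "b \<subseteq> UNIV \<and> card b = card B" using p(2) card_image by auto
  qed
  have Nform: "N_B B u (1 + u) 1 = card (Dset B u) + card B" for u :: 'a
    by (simp add: NB_P2 P2_D)
  have lamT: "s * card {b\<in>GA1_orbit B. {t1, t2, t3} \<subseteq> b} = card (Dset B ((t3 - t1) / (t2 - t1)))"
    if "t1 \<noteq> t2" for t1 t2 t3 :: 'a
    using count_blocks[of "{t1, t2, t3}" B] count_D[OF that, of t3 B] by (simp add: s_def)
  have lamU: "s * card {b\<in>GA1_orbit B. {0, 1, u} \<subseteq> b} = card (Dset B u)" for u :: 'a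
    using lamT[of 0 1 u] by simp
  have card3: "card {0, 1, u} = 3" if "u \<notin> {0, 1::'a}" for u
    using that by simp
  show ?thesis
  proof
    assume "is_3_design (UNIV :: 'a set) (GA1_orbit B) (card B)"
    then obtain lam where lam: "\<forall>T. T \<subseteq> (UNIV::'a set) \<and> card T = 3 \<longrightarrow> card {b\<in>GA1_orbit B. T \<subseteq> b} = lam"
      unfolding is_3_design_def by blast
    have "N_B B u (1 + u) 1 = s * lam + card B" if "u \<notin> {0, 1}" for u :: 'a
    proof -
      have L: "card {b\<in>GA1_orbit B. {0, 1, u} \<subseteq> b} = lam" using lam card3[OF that] by blast
      have "s * lam = card (Dset B u)" using L lamU[of u] by metis
      then show ?thesis using Nform[of u] by simp
    qed
    then show "indep_of_u (\<lambda>u. N_B B (u::'a) (1 + u) 1)"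
      unfolding indep_of_u_def by blast
  next
    assume "indep_of_u (\<lambda>u. N_B B (u::'a) (1 + u) 1)"
    then obtain c where c: "\<forall>u::'a. u \<notin> {0, 1} \<longrightarrow> N_B B u (1 + u) 1 = c"
      unfolding indep_of_u_def by blast
    have "card {b\<in>GA1_orbit B. T \<subseteq> b} = (c - card B) div s" if "card T = 3" for T :: "'a set"
    proof -
      obtain t1 t2 t3 where T: "T = {t1, t2, t3}" and d: "t1 \<noteq> t2" "t2 \<noteq> t3" "t1 \<noteq> t3"
        using \<open>card T = 3\<close> card_3_iff by metis
      define u where "u = (t3 - t1) / (t2 - t1)"
      have d21: "t2 - t1 \<noteq> 0" using d by simp
      have "u \<noteq> 0" using d d21 by (simp add: u_def)
      moreover have "u \<noteq> 1" using d d21 by (simp add: u_def)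
      ultimately have "N_B B u (1 + u) 1 = c" using c by simp
      then have "s * card {b\<in>GA1_orbit B. T \<subseteq> b} = c - card B"
        using lamT[OF d(1), of t3] Nform[of u] T u_def by simp
      then show ?thesis using s0 by (metis nonzero_mult_div_cancel_left less_irrefl)
    qed
    then show "is_3_design (UNIV :: 'a set) (GA1_orbit B) (card B)"
      unfolding is_3_design_def using blocks by blast
  qed
qed

end

theorem theorem9:
  fixes B :: "'a::{field,finite} set" and n k :: nat
  assumes "card (UNIV :: 'a set) = 2 ^ n" and "card B = k" and "k \<ge> 3"
  shows "(is_3_design (UNIV :: 'a set) (GA1_orbit B) k
            \<longleftrightarrow> indep_of_u (\<lambda>u. \<Sum>x\<in>UNIV. \<Sum>y\<in>UNIV.
                   sgn_char B x * sgn_char B y * sgn_char B (u * x + (1 + u) * y)))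
       \<and> (is_3_design (UNIV :: 'a set) (GA1_orbit B) k
            \<longleftrightarrow> indep_of_u (\<lambda>u. \<Sum>\<alpha>\<in>UNIV.
                   walsh n B \<alpha> * walsh n B (u * \<alpha>) * walsh n B ((1 + u) * \<alpha>)))
       \<and> (is_3_design (UNIV :: 'a set) (GA1_orbit B) k
            \<longleftrightarrow> indep_of_u (\<lambda>u. N_B B u (1 + u) 1))"
proof -
  note cq = assms(1)
  have DN: "is_3_design (UNIV :: 'a set) (GA1_orbit B) k \<longleftrightarrow> indep_of_u (\<lambda>u. N_B B (u::'a) (1 + u) 1)"
    using design_iff_N[OF cq, of B] assms(2) by simp
  define C where "C = (int (2^n) - 4 * int (card B)) * (int (2^n) - 2 * int (card B)) + 4 * int (card B)^2"
  have SN: "indep_of_u (\<lambda>u. \<Sum>x\<in>UNIV. \<Sum>y\<in>UNIV. sgn_char B x * sgn_char B y * sgn_char B (u * x + (1 + u) * y))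
      \<longleftrightarrow> indep_of_u (\<lambda>u. N_B B (u::'a) (1 + u) 1)"
  proof (rule indep_transfer[OF cq, where H = "\<lambda>m. C - 8 * int m"])
    show "\<forall>u. u \<notin> {0, 1} \<longrightarrow> (\<Sum>x\<in>UNIV. \<Sum>y\<in>UNIV. sgn_char B x * sgn_char B y * sgn_char B (u * x + (1 + u) * y))
        = C - 8 * int (N_B B u (1 + u) 1)"
      using S_formula[OF cq] NB_NN[OF cq] by (simp add: C_def)
    show "inj (\<lambda>m. C - 8 * int m)" by (auto simp: inj_on_def)
  qed
  have q0: "int (2^n) \<noteq> 0" by simp
  have WS: "indep_of_u (\<lambda>u. \<Sum>\<alpha>\<in>UNIV. walsh n B \<alpha> * walsh n B (u * \<alpha>) * walsh n B ((1 + u) * \<alpha>))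
      \<longleftrightarrow> indep_of_u (\<lambda>u. \<Sum>x\<in>UNIV. \<Sum>y\<in>UNIV. sgn_char B x * sgn_char B y * sgn_char B ((u::'a) * x + (1 + u) * y))"
  proof (rule indep_transfer[OF cq, where H = "\<lambda>s. int (2^n) * s"])
    show "\<forall>u. u \<notin> {0, 1} \<longrightarrow> (\<Sum>\<alpha>\<in>UNIV. walsh n B \<alpha> * walsh n B (u * \<alpha>) * walsh n B ((1 + u) * \<alpha>))
        = int (2^n) * (\<Sum>x\<in>UNIV. \<Sum>y\<in>UNIV. sgn_char B x * sgn_char B y * sgn_char B ((u::'a) * x + (1 + u) * y))"
      using walsh_triple[OF cq] by blast
    show "inj (\<lambda>s. int (2^n) * (s::int))" using q0 by (auto simp: inj_on_def)
  qed
  show ?thesis using DN SN WS by blast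
qed

end
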